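(* Let $v$ be a weight on $[0,1)$ satisfying $\lim_{r\to1^-}v(r)=0$. For each $t\in[0,1)$ both operators $C_t\colon H^\infty_v\to H^\infty_v$ and $C_t\colon H^0_v\to H^0_v$ are compact.
   Context: $\mathbb{D}=\{z\in\mathbb{C}:|z|<1\}$ and $H(\mathbb{D})$ is the space of holomorphic functions on $\mathbb{D}$. A weight is a continuous non-increasing function $v\colon[0,1)\to(0,\infty)$, extended to $\mathbb{D}$ by $v(z):=v(|z|)$. $H^\infty_v=\{f\in H(\mathbb{D}):\|f\|_{\infty,v}:=\sup_{z\in\mathbb{D}}|f(z)|v(z)<\infty\}$ and $H^0_v=\{f\in H(\mathbb{D}):\lim_{|z|\to1^-}|f(z)|v(z)=0\}$, both with the norm $\|\cdot\|_{\infty,v}$. For $t\in[0,1]$ the generalized Cesàro operator $C_t$ is defined on $f\in H(\mathbb{D})$ by $C_tf(0)=f(0)$ and $C_tf(z)=\frac{1}{z}\int_0^z\frac{f(\xi)}{1-t\xi}\,d\xi$ for $z\in\mathbb{D}\setminus\{0\}$. *)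

theory Defs
  imports "HOL-Complex_Analysis.Complex_Analysis"
begin

definition is_weight :: "(real \<Rightarrow> real) \<Rightarrow> bool" where
  "is_weight v \<longleftrightarrow> continuous_on {0..<1} v
     \<and> (\<forall>r s. 0 \<le> r \<and> r \<le> s \<and> s < 1 \<longrightarrow> v s \<le> v r)
     \<and> (\<forall>r. 0 \<le> r \<and> r < 1 \<longrightarrow> 0 < v r)"

definition wnorm :: "(real \<Rightarrow> real) \<Rightarrow> (complex \<Rightarrow> complex) \<Rightarrow> real" where
  "wnorm v f = (SUP z\<in>ball 0 1. norm (f z) * v (norm z))"

definition Hinf :: "(real \<Rightarrow> real) \<Rightarrow> (complex \<Rightarrow> complex) set" where
  "Hinf v = {f. f holomorphic_on ball 0 1
      \<and> bdd_above ((\<lambda>z. norm (f z) * v (norm z)) ` ball 0 1)}"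

definition H0 :: "(real \<Rightarrow> real) \<Rightarrow> (complex \<Rightarrow> complex) set" where
  "H0 v = {f. f holomorphic_on ball 0 1
      \<and> (\<forall>e>0. \<exists>r<1. \<forall>z. r < norm z \<and> norm z < 1 \<longrightarrow> norm (f z) * v (norm z) < e)}"

definition cesaro :: "real \<Rightarrow> (complex \<Rightarrow> complex) \<Rightarrow> complex \<Rightarrow> complex" where
  "cesaro t f z = (if z = 0 then f 0
     else contour_integral (linepath 0 z) (\<lambda>\<xi>. f \<xi> / (1 - of_real t * \<xi>)) / z)"

definition compact_op_on :: "(real \<Rightarrow> real) \<Rightarrow> (complex \<Rightarrow> complex) set
    \<Rightarrow> ((complex \<Rightarrow> complex) \<Rightarrow> (complex \<Rightarrow> complex)) \<Rightarrow> bool" where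
  "compact_op_on v X T \<longleftrightarrow> (\<forall>f\<in>X. T f \<in> X) \<and>
     (\<forall>F. (\<forall>n. F n \<in> X \<and> wnorm v (F n) \<le> 1) \<longrightarrow>
        (\<exists>(r::nat \<Rightarrow> nat) g. strict_mono r \<and> g \<in> X \<and>
           (\<lambda>n. wnorm v (\<lambda>z. T (F (r n)) z - g z)) \<longlonglongrightarrow> 0))"

end

theory Submission
  imports Defs
begin

lemma denom_bound:
  fixes t :: real and \<xi> :: complex
  assumes "0 \<le> t" "t < 1" "norm \<xi> < 1"
  shows "1 - t \<le> norm (1 - of_real t * \<xi>)"
proof -
  have "norm (of_real t * \<xi>) \<le> t"
    using assms by (simp add: norm_mult mult_left_le)
  moreover have "1 - norm (of_real t * \<xi>) \<le> norm (1 - of_real t * \<xi>)"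
    using norm_triangle_ineq2[of 1 "of_real t * \<xi>"] by simp
  ultimately show ?thesis by linarith
qed

lemma cesaro_primitive:
  fixes t :: real and f :: "complex \<Rightarrow> complex"
  assumes "0 \<le> t" "t < 1" "f holomorphic_on ball 0 1"
  obtains G where "\<And>z. z \<in> ball 0 1 \<Longrightarrow> (G has_field_derivative (f z / (1 - of_real t * z))) (at z)"
    and "\<And>z w. z \<in> ball 0 1 \<Longrightarrow> w \<in> ball 0 1 \<Longrightarrow>
          ((\<lambda>\<xi>. f \<xi> / (1 - of_real t * \<xi>)) has_contour_integral (G z - G w)) (linepath w z)"
proof -
  define h where "h = (\<lambda>\<xi>. f \<xi> / (1 - of_real t * \<xi>))"
  have nz: "1 - of_real t * \<xi> \<noteq> 0" if "\<xi> \<in> ball 0 1" for \<xi> :: complex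
    using denom_bound[OF assms(1,2), of \<xi>] that assms by auto
  have hol: "h holomorphic_on ball 0 1"
    unfolding h_def using assms nz by (auto intro!: holomorphic_intros)
  obtain G where G: "\<And>x. x \<in> ball 0 1 \<Longrightarrow> (G has_field_derivative h x) (at x)"
    using holomorphic_starlike_primitive[of "ball 0 1" h "{}"] hol
      holomorphic_on_imp_continuous_on holomorphic_on_imp_differentiable_at
    by (metis Diff_empty convex_ball convex_imp_starlike centre_in_ball finite.emptyI
        open_ball empty_iff zero_less_one)
  have "(h has_contour_integral (G z - G w)) (linepath w z)"
    if "z \<in> ball 0 1" "w \<in> ball 0 1" for z w
  proof -
    have seg: "closed_segment w z \<subseteq> ball 0 1"
      using that convex_ball[of "0::complex" 1] unfolding convex_contains_segment by blast
    have "(h has_contour_integral (G (pathfinish (linepath w z)) - G (pathstart (linepath w z)))) (linepath w z)"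
      by (rule contour_integral_primitive[where S="ball 0 1"])
        (use G seg in \<open>auto intro: has_field_derivative_at_within\<close>)
    then show ?thesis by simp
  qed
  then show ?thesis using that G unfolding h_def by blast
qed

lemma weight_mono: "is_weight v \<Longrightarrow> 0 \<le> r \<Longrightarrow> r \<le> s \<Longrightarrow> s < 1 \<Longrightarrow> v s \<le> v r"
  unfolding is_weight_def by blast

lemma weight_pos: "is_weight v \<Longrightarrow> 0 \<le> r \<Longrightarrow> r < 1 \<Longrightarrow> 0 < v r"
  unfolding is_weight_def by blast

context
  fixes v :: "real \<Rightarrow> real" and t :: real and f :: "complex \<Rightarrow> complex" and M :: real
  assumes w: "is_weight v" and t0: "0 \<le> t" and t1: "t < 1"
    and hol: "f holomorphic_on ball 0 1" and M0: "0 \<le> M"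
    and fM: "\<And>w. w \<in> ball 0 1 \<Longrightarrow> norm (f w) * v (norm w) \<le> M"
begin

lemma h_bound:
  assumes "norm \<xi> < 1" "norm \<xi> \<le> R" "R < 1"
  shows "norm (f \<xi> / (1 - of_real t * \<xi>)) \<le> M / ((1 - t) * v R)"
proof -
  have vR: "0 < v R" using weight_pos[OF w, of R] assms by (meson norm_ge_zero order_trans)
  have vx: "0 < v (norm \<xi>)" using weight_pos[OF w, of "norm \<xi>"] assms by simp
  have vle: "v R \<le> v (norm \<xi>)" using weight_mono[OF w, of "norm \<xi>" R] assms by simp
  have d: "1 - t \<le> norm (1 - of_real t * \<xi>)" using denom_bound[OF t0 t1 assms(1)] .
  have f1: "norm (f \<xi>) * v (norm \<xi>) \<le> M" using fM assms by simp
  have "norm (f \<xi>) * v R \<le> M"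
    by (meson f1 vle mult_left_mono norm_ge_zero order_trans)
  then have f2: "norm (f \<xi>) \<le> M / v R" using vR by (simp add: field_simps)
  have "norm (f \<xi> / (1 - of_real t * \<xi>)) = norm (f \<xi>) / norm (1 - of_real t * \<xi>)"
    by (simp add: norm_divide)
  also have "\<dots> \<le> (M / v R) / (1 - t)"
    using f2 d t1 M0 vR by (intro frac_le) auto
  finally show ?thesis by (simp add: divide_divide_eq_left mult.commute)
qed

lemma cesaro_facts:
  shows "cesaro t f holomorphic_on ball 0 1"
    and "\<And>z. z \<in> ball 0 1 \<Longrightarrow> norm (cesaro t f z) \<le> M / ((1 - t) * v (norm z))"
    and "\<And>\<delta> z. 0 < \<delta> \<Longrightarrow> \<delta> \<le> 1/2 \<Longrightarrow> 1 - \<delta> < norm z \<Longrightarrow> norm z < 1 \<Longrightarrow>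
           norm (cesaro t f z) * v (norm z) \<le> 2 * (M / (1 - t)) * (v (norm z) / v (1 - \<delta>) + \<delta>)"
proof -
  obtain G where G: "\<And>z. z \<in> ball 0 1 \<Longrightarrow> (G has_field_derivative (f z / (1 - of_real t * z))) (at z)"
    and Gi: "\<And>z w. z \<in> ball 0 1 \<Longrightarrow> w \<in> ball 0 1 \<Longrightarrow>
          ((\<lambda>\<xi>. f \<xi> / (1 - of_real t * \<xi>)) has_contour_integral (G z - G w)) (linepath w z)"
    using cesaro_primitive[OF t0 t1 hol] by metis
  have ci: "contour_integral (linepath 0 z) (\<lambda>\<xi>. f \<xi> / (1 - of_real t * \<xi>)) = G z - G 0"
    if "z \<in> ball 0 1" for z
    using contour_integral_unique[OF Gi[OF that(1), of 0]] by simp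
  have ces: "cesaro t f z = (G z - G 0) / z" if "z \<in> ball 0 1" "z \<noteq> 0" for z
    using contour_integral_unique[OF Gi[OF that(1), of 0]] that unfolding cesaro_def by simp
  have segb: "norm (G z - G w) \<le> M / ((1 - t) * v R) * norm (z - w)"
    if "z \<in> ball 0 1" "w \<in> ball 0 1" "norm z \<le> R" "norm w \<le> R" "R < 1" for z w R
  proof (rule has_contour_integral_bound_linepath[OF Gi[OF that(1,2)]])
    have "0 \<le> R" using that(3) norm_ge_zero order_trans by blast
    then have "0 < v R" using weight_pos[OF w] that by simp
    then show "0 \<le> M / ((1 - t) * v R)" using M0 t1 by simp
    fix x assume x: "x \<in> closed_segment w z"
    have "closed_segment w z \<subseteq> cball 0 R"
      using that convex_cball[of "0::complex" R] unfolding convex_contains_segment by auto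
    with x have "norm x \<le> R" by auto
    then show "norm (f x / (1 - of_real t * x)) \<le> M / ((1 - t) * v R)"
      using h_bound that by simp
  qed
  have G0: "G 0 = 0 \<or> True" by simp
  show "cesaro t f holomorphic_on ball 0 1"
  proof -
    have Ghol: "G holomorphic_on ball 0 1"
      using G by (auto simp: holomorphic_on_open) blast
    have d0: "deriv G 0 = f 0"
      using DERIV_imp_deriv[OF G[of 0]] by simp
    have "(\<lambda>z. if z = 0 then deriv G 0 else (G z - G 0) / (z - 0)) holomorphic_on ball 0 1"
      by (rule pole_lemma_open[OF Ghol open_ball])
    then show ?thesis
      by (rule holomorphic_transform) (auto simp: d0 ci cesaro_def)
  qed
  show pw: "norm (cesaro t f z) \<le> M / ((1 - t) * v (norm z))" if z: "z \<in> ball 0 1" for z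
  proof (cases "z = 0")
    case True
    have v0: "0 < v 0" using weight_pos[OF w] by simp
    have "norm (f 0) * v 0 \<le> M" using fM[of 0] by simp
    then have "norm (f 0) \<le> M / v 0" using v0 by (simp add: field_simps)
    also have "\<dots> \<le> M / ((1 - t) * v 0)"
      using v0 t0 t1 M0 by (intro divide_left_mono) (auto intro: mult_left_le_one_le)
    finally show ?thesis using True by (simp add: cesaro_def)
  next
    case False
    have "norm (G z - G 0) \<le> M / ((1 - t) * v (norm z)) * norm (z - 0)"
      using segb[of z 0 "norm z"] z by simp
    then show ?thesis using False z by (simp add: ces norm_divide field_simps)
  qed
  fix \<delta> :: real and z :: complex
  assume d0: "0 < \<delta>" and d1: "\<delta> \<le> 1/2" and z1: "1 - \<delta> < norm z" and z2: "norm z < 1"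
  define K where "K = M / (1 - t)"
  have K0: "0 \<le> K" using M0 t1 by (simp add: K_def)
  have zb: "z \<in> ball 0 1" using z2 by simp
  have nz: "z \<noteq> 0" using z1 d1 by auto
  define w where "w = of_real ((1 - \<delta>) / norm z) * z"
  have "norm w = \<bar>(1 - \<delta>) / norm z\<bar> * norm z" by (simp only: w_def norm_mult norm_of_real)
  then have nw: "norm w = 1 - \<delta>" using nz d1 by simp
  have wb: "w \<in> ball 0 1" using nw d0 by simp
  have zw: "z - w = of_real (1 - (1 - \<delta>) / norm z) * z"
    by (simp add: w_def algebra_simps)
  have nzw: "norm (z - w) = norm z - (1 - \<delta>)"
  proof -
    have "0 \<le> 1 - (1 - \<delta>) / norm z" using z1 nz by (simp add: field_simps)
    moreover have "norm (z - w) = \<bar>1 - (1 - \<delta>) / norm z\<bar> * norm z"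
      unfolding zw by (simp only: norm_mult norm_of_real)
    ultimately have "norm (z - w) = (1 - (1 - \<delta>) / norm z) * norm z" by simp
    also have "\<dots> = norm z - (1 - \<delta>)" using nz by (simp add: left_diff_distrib field_simps)
    finally show ?thesis .
  qed
  have vz: "0 < v (norm z)" using weight_pos[OF w] z2 by simp
  have vd: "0 < v (1 - \<delta>)" using weight_pos[OF w] d0 d1 by simp
  have A: "norm (G w - G 0) \<le> K / v (1 - \<delta>)"
  proof -
    have "norm (G w - G 0) \<le> M / ((1 - t) * v (1 - \<delta>)) * norm (w - 0)"
      using segb[of w 0 "1 - \<delta>"] wb nw d0 d1 by simp
    also have "\<dots> \<le> M / ((1 - t) * v (1 - \<delta>))"
      using nw d0 d1 M0 t1 vd by (intro mult_left_le) auto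
    finally show ?thesis by (simp add: K_def divide_divide_eq_left mult.commute)
  qed
  have B: "norm (G z - G w) \<le> K / v (norm z) * \<delta>"
  proof -
    have "norm (G z - G w) \<le> M / ((1 - t) * v (norm z)) * norm (z - w)"
      using segb[of z w "norm z"] zb wb nw z1 by simp
    also have "\<dots> \<le> M / ((1 - t) * v (norm z)) * \<delta>"
      using nzw z2 M0 t1 vz by (intro mult_left_mono) auto
    finally show ?thesis by (simp add: K_def divide_divide_eq_left mult.commute)
  qed
  have "norm (G z - G 0) \<le> K / v (1 - \<delta>) + K / v (norm z) * \<delta>"
    using A B norm_triangle_ineq[of "G w - G 0" "G z - G w"] by simp
  then have C: "norm (G z - G 0) * v (norm z) \<le> K * (v (norm z) / v (1 - \<delta>) + \<delta>)"
    using vz vd by (simp add: field_simps)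
  have "norm (cesaro t f z) * v (norm z) = norm (G z - G 0) * v (norm z) / norm z"
    using ces[OF zb nz] by (simp add: norm_divide)
  also have "\<dots> \<le> 2 * (norm (G z - G 0) * v (norm z))"
  proof -
    have "1/2 < norm z" using z1 d1 by simp
    moreover have "0 \<le> norm (G z - G 0) * v (norm z)" using vz by simp
    ultimately have "norm (G z - G 0) * v (norm z) * 1 \<le> norm (G z - G 0) * v (norm z) * (2 * norm z)"
      by (intro mult_left_mono) auto
    then show ?thesis using nz by (simp add: pos_divide_le_eq mult_ac)
  qed
  also have "\<dots> \<le> 2 * (K * (v (norm z) / v (1 - \<delta>) + \<delta>))" using C by simp
  finally show "norm (cesaro t f z) * v (norm z) \<le> 2 * (M / (1 - t)) * (v (norm z) / v (1 - \<delta>) + \<delta>)"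
    by (simp add: K_def)
qed

end

lemma tail_uniform:
  assumes w: "is_weight v" and lim: "(v \<longlongrightarrow> 0) (at_left 1)"
    and t0: "0 \<le> t" and t1: "t < 1" and M0: "0 \<le> M" and e: "0 < \<epsilon>"
  shows "\<exists>\<rho><1. \<forall>f z. f holomorphic_on ball 0 1 \<longrightarrow>
           (\<forall>w\<in>ball 0 1. norm (f w) * v (norm w) \<le> M) \<longrightarrow>
           \<rho> < norm z \<longrightarrow> norm z < 1 \<longrightarrow> norm (cesaro t f z) * v (norm z) \<le> \<epsilon>"
proof -
  define K where "K = M / (1 - t)"
  have K0: "0 \<le> K" using M0 t1 by (simp add: K_def)
  define \<delta> where "\<delta> = min (1/2) (\<epsilon> / (4 * K + 1))"
  have d0: "0 < \<delta>" using e K0 by (simp add: \<delta>_def)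
  have d1: "\<delta> \<le> 1/2" unfolding \<delta>_def by (rule min.cobounded1)
  have d2: "2 * K * \<delta> \<le> \<epsilon> / 2"
  proof -
    have "\<delta> \<le> \<epsilon> / (4 * K + 1)" by (simp add: \<delta>_def)
    then have "2 * K * \<delta> \<le> 2 * K * (\<epsilon> / (4 * K + 1))" using K0 by (intro mult_left_mono) auto
    also have "\<dots> \<le> \<epsilon> / 2" using K0 e by (simp add: field_simps)
    finally show ?thesis .
  qed
  have vd: "0 < v (1 - \<delta>)" using weight_pos[OF w] d0 d1 by simp
  define c where "c = \<epsilon> * v (1 - \<delta>) / (4 * K + 1)"
  have c0: "0 < c" using e vd K0 by (simp add: c_def)
  have "eventually (\<lambda>s. v s < c) (at_left 1)"
    using order_tendstoD(2)[OF lim c0] .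
  then obtain \<rho>0 where \<rho>0: "\<rho>0 < 1" and vc: "\<And>s. \<rho>0 < s \<Longrightarrow> s < 1 \<Longrightarrow> v s < c"
    unfolding eventually_at_left_field by blast
  define \<rho> where "\<rho> = max \<rho>0 (1 - \<delta>)"
  have "\<rho> < 1" using \<rho>0 d0 by (simp add: \<rho>_def)
  moreover have "norm (cesaro t f z) * v (norm z) \<le> \<epsilon>"
    if f: "f holomorphic_on ball 0 1" "\<forall>w\<in>ball 0 1. norm (f w) * v (norm w) \<le> M"
      and z: "\<rho> < norm z" "norm z < 1" for f z
  proof -
    have z1: "1 - \<delta> < norm z" using z by (simp add: \<rho>_def)
    have vz: "v (norm z) < c" using vc z by (simp add: \<rho>_def)
    have "norm (cesaro t f z) * v (norm z) \<le> 2 * K * (v (norm z) / v (1 - \<delta>) + \<delta>)"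
      using cesaro_facts(3)[OF w t0 t1 f(1) M0 _ d0 d1 z1 z(2)] f(2) by (simp add: K_def)
    also have "\<dots> = 2 * K * (v (norm z) / v (1 - \<delta>)) + 2 * K * \<delta>" by (simp add: algebra_simps)
    also have "2 * K * (v (norm z) / v (1 - \<delta>)) \<le> 2 * K * (c / v (1 - \<delta>))"
      using vz vd K0 by (intro mult_left_mono divide_right_mono) auto
    also have "2 * K * (c / v (1 - \<delta>)) = 2 * K * \<epsilon> / (4 * K + 1)"
      using vd K0 by (simp add: c_def)
    also have "\<dots> \<le> \<epsilon> / 2" using K0 e by (simp add: field_simps)
    finally show ?thesis using d2 by simp
  qed
  ultimately show ?thesis by blast
qed

lemma sup_bound:
  fixes \<phi> :: "complex \<Rightarrow> real"
  assumes "\<And>z. z \<in> ball 0 1 \<Longrightarrow> 0 \<le> \<phi> z \<and> \<phi> z \<le> c"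
  shows "0 \<le> (SUP z\<in>ball 0 1. \<phi> z) \<and> (SUP z\<in>ball 0 1. \<phi> z) \<le> c"
proof
  have bdd: "bdd_above (\<phi> ` ball 0 1)" by (rule bdd_aboveI2[where M=c]) (use assms in auto)
  have "\<phi> 0 \<le> (SUP z\<in>ball 0 1. \<phi> z)" by (rule cSUP_upper[OF _ bdd]) simp
  then show "0 \<le> (SUP z\<in>ball 0 1. \<phi> z)" using assms[of 0] by simp
  show "(SUP z\<in>ball 0 1. \<phi> z) \<le> c" using assms by (intro cSUP_least) auto
qed

lemma Hinf_bound:
  assumes "f \<in> Hinf v" "z \<in> ball 0 1"
  shows "norm (f z) * v (norm z) \<le> wnorm v f"
  using assms unfolding Hinf_def wnorm_def by (auto intro: cSUP_upper)

lemma H0_sub: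
  assumes w: "is_weight v"
  shows "H0 v \<subseteq> Hinf v"
proof
  fix f assume f: "f \<in> H0 v"
  then have hol: "f holomorphic_on ball 0 1" by (simp add: H0_def)
  have "\<exists>r<1. \<forall>z. r < norm z \<and> norm z < 1 \<longrightarrow> norm (f z) * v (norm z) < 1"
    using f unfolding H0_def by auto
  then obtain r where r1: "r < 1" and r: "\<And>z. r < norm z \<Longrightarrow> norm z < 1 \<Longrightarrow> norm (f z) * v (norm z) < 1"
    by blast
  define r' where "r' = max 0 r"
  have sub: "cball 0 r' \<subseteq> ball 0 1" using r1 by (auto simp: r'_def)
  have "compact (f ` cball 0 r')"
    using hol sub by (intro compact_continuous_image holomorphic_on_imp_continuous_on)
      (auto intro: holomorphic_on_subset)
  then obtain B where B: "\<And>z. z \<in> cball 0 r' \<Longrightarrow> norm (f z) \<le> B"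
    using compact_imp_bounded bounded_iff by (metis imageI)
  have v0: "0 < v 0" using weight_pos[OF w] by simp
  have "norm (f z) * v (norm z) \<le> max 1 (B * v 0)" if z: "z \<in> ball 0 1" for z
  proof (cases "norm z \<le> r'")
    case True
    have vz: "0 < v (norm z)" "v (norm z) \<le> v 0" using weight_pos[OF w] weight_mono[OF w] z by auto
    have "norm (f z) * v (norm z) \<le> B * v 0"
      using B[of z] True vz by (intro mult_mono) (auto intro: order_trans[OF norm_ge_zero])
    then show ?thesis by simp
  next
    case False
    then have "norm (f z) * v (norm z) < 1" using r[of z] z by (simp add: r'_def)
    then show ?thesis by linarith
  qed
  then show "f \<in> Hinf v" using hol unfolding Hinf_def by (auto intro!: bdd_aboveI2[where M="max 1 (B * v 0)"])
qed

lemma maps_H0: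
  assumes w: "is_weight v" and lim: "(v \<longlongrightarrow> 0) (at_left 1)"
    and t0: "0 \<le> t" and t1: "t < 1" and f: "f \<in> Hinf v"
  shows "cesaro t f \<in> H0 v"
proof -
  have hol: "f holomorphic_on ball 0 1" using f by (simp add: Hinf_def)
  define M where "M = max 0 (wnorm v f)"
  have M0: "0 \<le> M" by (simp add: M_def)
  have fM: "\<forall>w\<in>ball 0 1. norm (f w) * v (norm w) \<le> M"
    using Hinf_bound[OF f] by (force simp: M_def)
  have "\<exists>r<1. \<forall>z. r < norm z \<and> norm z < 1 \<longrightarrow> norm (cesaro t f z) * v (norm z) < e" if e: "e > 0" for e
  proof -
    obtain \<rho> where "\<rho> < 1" and \<rho>: "\<forall>f z. f holomorphic_on ball 0 1 \<longrightarrow>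
           (\<forall>w\<in>ball 0 1. norm (f w) * v (norm w) \<le> M) \<longrightarrow>
           \<rho> < norm z \<longrightarrow> norm z < 1 \<longrightarrow> norm (cesaro t f z) * v (norm z) \<le> e/2"
      using tail_uniform[OF w lim t0 t1 M0, of "e/2"] e by auto
    then show ?thesis using hol fM e by (intro exI[of _ \<rho>]) force
  qed
  moreover have "cesaro t f holomorphic_on ball 0 1"
    using cesaro_facts(1)[OF w t0 t1 hol M0] fM by simp
  ultimately show ?thesis unfolding H0_def by blast
qed

lemma compact_general:
  assumes w: "is_weight v" and lim: "(v \<longlongrightarrow> 0) (at_left 1)"
    and t0: "0 \<le> t" and t1: "t < 1"
    and X1: "H0 v \<subseteq> X" and X2: "X \<subseteq> Hinf v"
  shows "compact_op_on v X (cesaro t)"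
  unfolding compact_op_on_def
proof (intro conjI ballI allI impI)
  fix f assume "f \<in> X"
  then show "cesaro t f \<in> X" using maps_H0[OF w lim t0 t1] X1 X2 by blast
next
  fix F :: "nat \<Rightarrow> complex \<Rightarrow> complex" assume F: "\<forall>n. F n \<in> X \<and> wnorm v (F n) \<le> 1"
  have FH: "F n \<in> Hinf v" for n using F X2 by blast
  have Fh: "F n holomorphic_on ball 0 1" for n using FH by (simp add: Hinf_def)
  have Fb: "\<forall>w\<in>ball 0 1. norm (F n w) * v (norm w) \<le> 1" for n
    using Hinf_bound[OF FH] F by (meson order_trans)
  define P where "P = (\<lambda>f. f holomorphic_on ball 0 1 \<and> (\<forall>w\<in>ball 0 1. norm (f w) * v (norm w) \<le> 1))"
  define \<H> where "\<H> = {cesaro t f | f. P f}"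
  define \<F> where "\<F> = (\<lambda>n. cesaro t (F n))"
  have PF: "P (F n)" for n using Fh Fb by (simp add: P_def)
  have hH: "h holomorphic_on ball 0 1" if "h \<in> \<H>" for h
    using that cesaro_facts(1)[OF w t0 t1, of _ 1] by (auto simp: \<H>_def P_def)
  have bH: "\<exists>B. \<forall>h\<in>\<H>. \<forall>z\<in>K. norm (h z) \<le> B" if K: "compact K" "K \<subseteq> ball 0 1" for K
  proof (cases "K = {}")
    case True then show ?thesis by auto
  next
    case False
    have "compact (norm ` K)" using K by (intro compact_continuous_image continuous_intros)
    then obtain R where R: "R \<in> norm ` K" and RK: "\<And>z. z \<in> K \<Longrightarrow> norm z \<le> R"
      using compact_attains_sup[of "norm ` K"] False by auto
    have R1: "R < 1" "0 \<le> R" using R K by auto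
    show ?thesis
    proof (intro exI ballI)
      fix h z assume h: "h \<in> \<H>" and z: "z \<in> K"
      then obtain f where hf: "h = cesaro t f" and Pf: "P f" by (auto simp: \<H>_def)
      have zb: "z \<in> ball 0 1" using z K by auto
      have vz: "0 < v (norm z)" "v R \<le> v (norm z)"
        using weight_pos[OF w] weight_mono[OF w] zb RK[OF z] R1 by auto
      have "norm (h z) \<le> 1 / ((1 - t) * v (norm z))"
        using cesaro_facts(2)[OF w t0 t1, of f 1 z] Pf zb hf by (simp add: P_def)
      also have "\<dots> \<le> 1 / ((1 - t) * v R)"
        using vz t1 weight_pos[OF w, of R] R1
        by (intro divide_left_mono mult_left_mono mult_pos_pos) auto
      finally show "norm (h z) \<le> 1 / ((1 - t) * v R)" .
    qed
  qed
  have rng: "range \<F> \<subseteq> \<H>" using PF by (auto simp: \<F>_def \<H>_def)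
  obtain g r where ghol: "g holomorphic_on ball 0 1" and r: "strict_mono (r :: nat \<Rightarrow> nat)"
    and pt: "\<And>x. x \<in> ball 0 1 \<Longrightarrow> ((\<lambda>n. \<F> (r n) x) \<longlongrightarrow> g x) sequentially"
    and un: "\<And>K. \<lbrakk>compact K; K \<subseteq> ball 0 1\<rbrakk> \<Longrightarrow> uniform_limit K (\<F> \<circ> r) g sequentially"
    using Montel[OF open_ball hH bH rng] by metis
  have tailF: "\<exists>\<rho><1. \<forall>n z. \<rho> < norm z \<longrightarrow> norm z < 1 \<longrightarrow> norm (\<F> n z) * v (norm z) \<le> e
                \<and> norm (g z) * v (norm z) \<le> e" if e: "0 < e" for e
  proof -
    obtain \<rho> where \<rho>1: "\<rho> < 1" and \<rho>: "\<forall>f z. f holomorphic_on ball 0 1 \<longrightarrow>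
           (\<forall>w\<in>ball 0 1. norm (f w) * v (norm w) \<le> 1) \<longrightarrow>
           \<rho> < norm z \<longrightarrow> norm z < 1 \<longrightarrow> norm (cesaro t f z) * v (norm z) \<le> e"
      using tail_uniform[OF w lim t0 t1 _ e, of 1] by auto
    have Fz: "norm (\<F> n z) * v (norm z) \<le> e" if "\<rho> < norm z" "norm z < 1" for n z
      using \<rho> Fh Fb that by (simp add: \<F>_def)
    have gz: "norm (g z) * v (norm z) \<le> e" if z: "\<rho> < norm z" "norm z < 1" for z
    proof -
      have "(\<lambda>n. norm (\<F> (r n) z) * v (norm z)) \<longlonglongrightarrow> norm (g z) * v (norm z)"
        using pt[of z] z by (intro tendsto_intros) auto
      then show ?thesis by (rule LIMSEQ_le_const2) (use Fz z in auto)
    qed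
    show ?thesis using \<rho>1 Fz gz by blast
  qed
  have gH0: "g \<in> H0 v"
  proof -
    have "\<exists>r<1. \<forall>z. r < norm z \<and> norm z < 1 \<longrightarrow> norm (g z) * v (norm z) < e" if e: "0 < e" for e
    proof -
      obtain \<rho> where "\<rho> < 1" "\<forall>n z. \<rho> < norm z \<longrightarrow> norm z < 1 \<longrightarrow> norm (\<F> n z) * v (norm z) \<le> e/2
                \<and> norm (g z) * v (norm z) \<le> e/2"
        using tailF[of "e/2"] e by auto
      then show ?thesis using e by (intro exI[of _ \<rho>]) force
    qed
    then show ?thesis using ghol by (simp add: H0_def)
  qed
  have conv: "(\<lambda>n. wnorm v (\<lambda>z. cesaro t (F (r n)) z - g z)) \<longlonglongrightarrow> 0"
  proof (rule LIMSEQ_I)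
    fix e :: real assume e: "0 < e"
    obtain \<rho> where \<rho>1: "\<rho> < 1" and \<rho>: "\<forall>n z. \<rho> < norm z \<longrightarrow> norm z < 1 \<longrightarrow> norm (\<F> n z) * v (norm z) \<le> e/4
                \<and> norm (g z) * v (norm z) \<le> e/4"
      using tailF[of "e/4"] e by auto
    define \<rho>' where "\<rho>' = max 0 \<rho>"
    have sub: "cball 0 \<rho>' \<subseteq> ball 0 1" using \<rho>1 by (auto simp: \<rho>'_def)
    have v0: "0 < v 0" using weight_pos[OF w] by simp
    have "\<forall>\<^sub>F n in sequentially. \<forall>x\<in>cball 0 \<rho>'. dist ((\<F> \<circ> r) n x) (g x) < e / (4 * v 0)"
      using uniform_limitD[OF un[OF compact_cball sub]] e v0 by simp
    then obtain N where N: "\<And>n x. n \<ge> N \<Longrightarrow> x \<in> cball 0 \<rho>' \<Longrightarrow> dist (\<F> (r n) x) (g x) < e / (4 * v 0)"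
      unfolding eventually_sequentially o_def by blast
    show "\<exists>no. \<forall>n\<ge>no. norm (wnorm v (\<lambda>z. cesaro t (F (r n)) z - g z) - 0) < e"
    proof (intro exI allI impI)
      fix n assume n: "N \<le> n"
      have "0 \<le> norm (\<F> (r n) z - g z) * v (norm z) \<and> norm (\<F> (r n) z - g z) * v (norm z) \<le> e/2"
        if z: "z \<in> ball 0 1" for z
      proof -
        have vz: "0 < v (norm z)" "v (norm z) \<le> v 0"
          using weight_pos[OF w] weight_mono[OF w] z by auto
        have "norm (\<F> (r n) z - g z) * v (norm z) \<le> e/2"
        proof (cases "norm z \<le> \<rho>'")
          case True
          have d: "norm (\<F> (r n) z - g z) \<le> e / (4 * v 0)"
            using N[OF n, of z] True by (simp add: dist_norm)
          have "norm (\<F> (r n) z - g z) * v (norm z) \<le> e / (4 * v 0) * v 0"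
            using d vz e v0 by (intro mult_mono) auto
          also have "\<dots> = e/4" using v0 by simp
          finally show ?thesis using e by simp
        next
          case False
          then have "\<rho> < norm z" by (simp add: \<rho>'_def)
          then have a: "norm (\<F> (r n) z) * v (norm z) \<le> e/4" and b: "norm (g z) * v (norm z) \<le> e/4"
            using \<rho> z by auto
          have "norm (\<F> (r n) z - g z) * v (norm z) \<le> (norm (\<F> (r n) z) + norm (g z)) * v (norm z)"
            using vz by (intro mult_right_mono norm_triangle_ineq4) auto
          then show ?thesis using a b by (simp add: algebra_simps)
        qed
        then show ?thesis using vz by simp
      qed
      then have "0 \<le> wnorm v (\<lambda>z. \<F> (r n) z - g z) \<and> wnorm v (\<lambda>z. \<F> (r n) z - g z) \<le> e/2"
        unfolding wnorm_def by (rule sup_bound)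
      then show "norm (wnorm v (\<lambda>z. cesaro t (F (r n)) z - g z) - 0) < e"
        using e by (simp add: \<F>_def)
    qed
  qed
  show "\<exists>r g. strict_mono r \<and> g \<in> X \<and> (\<lambda>n. wnorm v (\<lambda>z. cesaro t (F (r n)) z - g z)) \<longlonglongrightarrow> 0"
    using r gH0 X1 conv by blast
qed

theorem proposition2p7:
  fixes v :: "real \<Rightarrow> real" and t :: real
  assumes "is_weight v"
    and "(v \<longlongrightarrow> 0) (at_left 1)"
    and "0 \<le> t" and "t < 1"
  shows "compact_op_on v (Hinf v) (cesaro t) \<and> compact_op_on v (H0 v) (cesaro t)"
  using compact_general[OF assms H0_sub[OF assms(1)] order_refl]
    compact_general[OF assms order_refl H0_sub[OF assms(1)]] by blast

end
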